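(* Let $T\in C_0(\mathbb{R}^N;\mathbb{Z})$ be an integral $0$-chain (a finite integer combination of points of $\mathbb{R}^N$) which is the boundary of an integral Lipschitz $1$-chain. Then $\mathrm{FV}(T)=\mathrm{FV}(2T)/2$.
   Context: An integral Lipschitz $1$-chain in $\mathbb{R}^N$ is a finite formal integer combination of Lipschitz maps $[0,1]\to\mathbb{R}^N$; its mass is $\sum_i|a_i|\,\mathrm{length}(\alpha_i)$. $\mathrm{FV}(T)=\inf\{\mathrm{mass}\,U: U \text{ integral Lipschitz } 1\text{-chain},\ \partial U=T\}$. *)

theory Defs
  imports "HOL-Analysis.Analysis"
begin

definition curve_length :: "(real \<Rightarrow> 'a::metric_space) \<Rightarrow> real" where
  "curve_length \<gamma> = Sup {(\<Sum>(s,t)\<leftarrow>zip ts (tl ts). dist (\<gamma> s) (\<gamma> t)) | ts.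
       sorted ts \<and> set ts \<subseteq> {0..1}}"

definition zero_chain :: "('a \<Rightarrow> int) \<Rightarrow> bool" where
  "zero_chain T \<longleftrightarrow> finite {x. T x \<noteq> 0}"

text \<open>Integral Lipschitz 1-chains: finite formal integer combinations of
  Lipschitz maps [0,1] -> R^N, represented as lists of (coefficient, map).\<close>
definition lip_chain :: "(int \<times> (real \<Rightarrow> 'a::metric_space)) list \<Rightarrow> bool" where
  "lip_chain U \<longleftrightarrow> (\<forall>(a,\<gamma>)\<in>set U. \<exists>C. C-lipschitz_on {0..1} \<gamma>)"

definition chain_boundary :: "(int \<times> (real \<Rightarrow> 'a)) list \<Rightarrow> ('a \<Rightarrow> int)" where
  "chain_boundary U = (\<lambda>x. \<Sum>(a,\<gamma>)\<leftarrow>U.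
       (if \<gamma> 1 = x then a else 0) - (if \<gamma> 0 = x then a else 0))"

definition chain_mass :: "(int \<times> (real \<Rightarrow> 'a::metric_space)) list \<Rightarrow> real" where
  "chain_mass U = (\<Sum>(a,\<gamma>)\<leftarrow>U. real_of_int \<bar>a\<bar> * curve_length \<gamma>)"

definition FV :: "('a::metric_space \<Rightarrow> int) \<Rightarrow> real" where
  "FV T = Inf {chain_mass U | U. lip_chain U \<and> chain_boundary U = T}"

end

theory Submission imports Defs begin

definition ob :: "bool \<Rightarrow> 'a \<times> 'a \<Rightarrow> 'a \<Rightarrow> int" where
  "ob s e x = (if s then 1 else -1) * (of_bool (snd e = x) - of_bool (fst e = x))"

definition deg :: "('a \<times> 'a) list \<Rightarrow> 'a \<Rightarrow> int" where
  "deg E x = (\<Sum>e\<leftarrow>E. of_bool (fst e = x) + of_bool (snd e = x))"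

lemma deg_Cons[simp]: "deg (e # E) x = of_bool (fst e = x) + of_bool (snd e = x) + deg E x"
  by (simp add: deg_def)
lemma deg_append[simp]: "deg (xs @ ys) x = deg xs x + deg ys x"
  by (simp add: deg_def)
lemma deg_Nil[simp]: "deg [] x = 0" by (simp add: deg_def)

lemma deg_nz: "deg R q \<noteq> 0 \<Longrightarrow> \<exists>e\<in>set R. fst e = q \<or> snd e = q"
proof (induction R)
  case (Cons a R)
  then show ?case by (cases "fst a = q \<or> snd a = q") auto
qed simp

lemma sum_zip_append:
  "length a = length xs \<Longrightarrow> (\<Sum>(s,e)\<leftarrow>zip (a @ b) (xs @ ys). f s e) =
     (\<Sum>(s,e)\<leftarrow>zip a xs. f s e) + (\<Sum>(s,e)\<leftarrow>zip b ys. f s e)"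
  by simp

lemma balanced:
  "(\<forall>x. even (deg E x)) \<Longrightarrow> \<exists>S. length S = length E \<and> (\<forall>x. (\<Sum>(s,e)\<leftarrow>zip S E. ob s e x) = 0)"
proof (induction "length E" arbitrary: E rule: less_induct)
  case less
  show ?case
  proof (cases E)
    case Nil then show ?thesis by auto
  next
    case (Cons e R)
    obtain p q where e: "e = (p,q)" by force
    show ?thesis
    proof (cases "p = q")
      case True
      have "\<forall>x. even (deg R x)"
      proof
        fix x show "even (deg R x)" using less.prems[rule_format, of x] Cons e True by auto
      qed
      from less.hyps[OF _ this] Cons obtain S where S: "length S = length R"
        "\<forall>x. (\<Sum>(s,e)\<leftarrow>zip S R. ob s e x) = 0" by auto
      show ?thesis
        by (rule exI[of _ "True # S"]) (use S Cons e True in \<open>auto simp: ob_def\<close>)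
    next
      case False
      have "odd (deg R q)" using less.prems[rule_format, of q] Cons e False by auto
      hence dnz: "deg R q \<noteq> 0" by (metis dvd_0_right)
      then obtain e2 where e2: "e2 \<in> set R" "fst e2 = q \<or> snd e2 = q"
        using deg_nz[OF dnz] by blast
      then obtain xs ys where R: "R = xs @ e2 # ys" by (meson split_list)
      define r where "r = (if fst e2 = q then snd e2 else fst e2)"
      define E' where "E' = (p, r) # xs @ ys"
      have dd: "of_bool (fst e2 = x) + of_bool (snd e2 = x) = (of_bool (q = x) + of_bool (r = x) :: int)" for x
        using e2(2) r_def by auto
      have "\<forall>x. even (deg E' x)"
      proof
        fix x
        have "deg E x = deg E' x + 2 * of_bool (q = x)"
          using Cons e R dd[of x] by (simp add: E'_def)
        then show "even (deg E' x)" using less.prems[rule_format, of x] by simp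
      qed
      moreover have "length E' < length E" using Cons R E'_def by simp
      ultimately obtain S' where S': "length S' = length E'"
        "\<forall>x. (\<Sum>(s,e)\<leftarrow>zip S' E'. ob s e x) = 0" using less.hyps by blast
      then obtain s S'' where S'': "S' = s # S''" unfolding E'_def by (cases S') auto
      define sx where "sx = take (length xs) S''"
      define sy where "sy = drop (length xs) S''"
      have lsx: "length sx = length xs" using S' S'' by (simp add: sx_def E'_def)
      have lsy: "length sy = length ys" using S' S'' by (simp add: sy_def E'_def)
      define s2 where "s2 = (if fst e2 = q then s else \<not> s)"
      have key: "ob s (p,q) x + ob s2 e2 x = ob s (p,r) x" for x
        using e2(2) unfolding ob_def s2_def r_def by (cases e2) auto
      show ?thesis
      proof (rule exI[of _ "s # sx @ s2 # sy"], intro conjI allI)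
        show "length (s # sx @ s2 # sy) = length E" using lsx lsy Cons R by simp
      next
        fix x
        have "S'' = sx @ sy" by (simp add: sx_def sy_def)
        hence "ob s (p,r) x + (\<Sum>(s,e)\<leftarrow>zip sx xs. ob s e x) + (\<Sum>(s,e)\<leftarrow>zip sy ys. ob s e x) = 0"
          using S'(2)[rule_format, of x] S'' lsx by (simp add: E'_def)
        then show "(\<Sum>(s,e)\<leftarrow>zip (s # sx @ s2 # sy) E. ob s e x) = 0"
          using Cons e R lsx key[of x] by simp
      qed
    qed
  qed
qed


lemma poly_bound:
  fixes \<gamma> :: "real \<Rightarrow> 'a::metric_space" and ts :: "real list"
  assumes "C-lipschitz_on {0..1} \<gamma>" "sorted ts" "set ts \<subseteq> {0..1}" "ts \<noteq> []"
  shows "(\<Sum>(s,t)\<leftarrow>zip ts (tl ts). dist (\<gamma> s) (\<gamma> t)) \<le> C * (last ts - hd ts)"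
  using assms(2-4)
proof (induction ts rule: induct_list012)
  case (3 a b rest)
  have ab: "a \<le> b" using 3(3) by simp
  have "dist (\<gamma> a) (\<gamma> b) \<le> C * dist a b"
    using assms(1) 3(4) unfolding lipschitz_on_def by auto
  also have "dist a b = b - a" using ab by (simp add: dist_real_def)
  finally have 1: "dist (\<gamma> a) (\<gamma> b) \<le> C * (b - a)" .
  have 2: "(\<Sum>(s,t)\<leftarrow>zip (b#rest) (tl (b#rest)). dist (\<gamma> s) (\<gamma> t)) \<le> C * (last (b#rest) - b)"
    using 3 by auto
  show ?case using 1 2 by (simp add: algebra_simps)
qed auto

lemma curve_length_bdd:
  fixes \<gamma> :: "real \<Rightarrow> 'a::metric_space"
  assumes "C-lipschitz_on {0..1} \<gamma>"
  shows "bdd_above {(\<Sum>(s,t)\<leftarrow>zip ts (tl ts). dist (\<gamma> s) (\<gamma> t)) | ts.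
       sorted ts \<and> set ts \<subseteq> {0..1}}"
proof (rule bdd_aboveI, clarify)
  fix ts :: "real list" assume ts: "sorted ts" "set ts \<subseteq> {0..1}"
  have C: "C \<ge> 0" using assms by (simp add: lipschitz_on_def)
  show "(\<Sum>(s,t)\<leftarrow>zip ts (tl ts). dist (\<gamma> s) (\<gamma> t)) \<le> C"
  proof (cases "ts = []")
    case False
    have "last ts \<in> {0..1}" "hd ts \<in> {0..1}" using ts(2) False by (meson last_in_set hd_in_set subsetD)+
    hence "C * (last ts - hd ts) \<le> C * 1" using C by (intro mult_left_mono) auto
    then show ?thesis using poly_bound[OF assms ts False] by simp
  qed (use C in simp)
qed

lemma curve_length_nonneg:
  fixes \<gamma> :: "real \<Rightarrow> 'a::metric_space"
  assumes "C-lipschitz_on {0..1} \<gamma>"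
  shows "curve_length \<gamma> \<ge> 0"
proof -
  have "(0::real) \<in> {(\<Sum>(s,t)\<leftarrow>zip ts (tl ts). dist (\<gamma> s) (\<gamma> t)) | ts.
       sorted ts \<and> set ts \<subseteq> {0..1}}" by (auto intro!: exI[of _ "[]"])
  from cSup_upper2[OF this order_refl curve_length_bdd[OF assms]] show ?thesis
    unfolding curve_length_def .
qed

lemma mass_nonneg: "lip_chain U \<Longrightarrow> chain_mass U \<ge> 0"
  unfolding chain_mass_def lip_chain_def
  by (induction U) (auto intro!: add_nonneg_nonneg mult_nonneg_nonneg dest: curve_length_nonneg)

definition dbl :: "(int \<times> 'b) list \<Rightarrow> (int \<times> 'b) list" where
  "dbl U = map (\<lambda>(a,\<gamma>). (2*a,\<gamma>)) U"

lemma dbl_lip: "lip_chain (dbl U) = lip_chain U"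
  unfolding dbl_def lip_chain_def by auto

lemma dbl_bd_pt: "chain_boundary (dbl U) x = 2 * chain_boundary U x"
  unfolding dbl_def chain_boundary_def by (induction U) (auto simp: algebra_simps)

lemma dbl_mass: "chain_mass (dbl U) = 2 * chain_mass U"
  unfolding dbl_def chain_mass_def by (induction U) (auto simp: algebra_simps abs_mult)

lemma dbl_props:
  "lip_chain (dbl U) = lip_chain U"
  "chain_boundary (dbl U) = (\<lambda>x. 2 * chain_boundary U x)"
  "chain_mass (dbl U) = 2 * chain_mass U"
  using dbl_lip dbl_bd_pt dbl_mass by (auto simp: fun_eq_iff)

definition expand :: "(int \<times> 'b) list \<Rightarrow> (int \<times> 'b) list" where
  "expand U = concat (map (\<lambda>(a,\<gamma>). replicate (nat \<bar>a\<bar>) (sgn a, \<gamma>)) U)"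

lemma expand_Cons: "expand ((a,\<gamma>) # U) = replicate (nat \<bar>a\<bar>) (sgn a, \<gamma>) @ expand U"
  by (simp add: expand_def)

lemma sum_rep: "sum_list (map f (replicate n v)) = of_nat n * f v"
  by (induction n) (auto simp: algebra_simps)

lemma expand_boundary: "chain_boundary (expand U) x = chain_boundary U x"
proof (induction U)
  case (Cons v U)
  obtain a \<gamma> where v: "v = (a,\<gamma>)" by force
  have "of_int (int (nat \<bar>a\<bar>)) * sgn a = a" by (simp add: abs_mult_sgn)
  then show ?case using Cons v
    by (simp add: expand_Cons chain_boundary_def sum_rep sum_list_replicate algebra_simps del: abs_mult_sgn)
qed (simp add: expand_def chain_boundary_def)

lemma expand_mass: "chain_mass (expand U) = chain_mass U"
proof (induction U)
  case (Cons v U)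
  obtain a \<gamma> where v: "v = (a,\<gamma>)" by force
  have "real (nat \<bar>a\<bar>) * real_of_int \<bar>sgn a\<bar> = real_of_int \<bar>a\<bar>"
    by (auto simp: sgn_if abs_if)
  then show ?case using Cons v
    by (cases "a = 0") (simp_all add: expand_Cons sgn_if chain_mass_def sum_rep sum_list_replicate algebra_simps del: abs_mult_sgn)
qed (simp add: expand_def chain_mass_def)

lemma expand_lip: "lip_chain U \<Longrightarrow> lip_chain (expand U)"
  unfolding lip_chain_def expand_def by auto

lemma expand_unit: "v \<in> set (expand U) \<Longrightarrow> fst v = 1 \<or> fst v = -1"
  unfolding expand_def by (auto simp: sgn_if split: if_splits)

lemma split_sum:
  fixes g :: "_ \<Rightarrow> 'c::comm_monoid_add"
  shows "length S = length V \<Longrightarrow> sum_list (map g V) =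
     sum_list (map g (map snd (filter fst (zip S V)))) + sum_list (map g (map snd (filter (Not \<circ> fst) (zip S V))))"
proof (induction V arbitrary: S)
  case (Cons v V)
  then show ?case by (cases S) (auto simp: add_ac)
qed simp

lemma split_diff:
  "length S = length V \<Longrightarrow> (\<Sum>(s,v)\<leftarrow>zip S V. (if s then 1 else -1) * (g v :: 'c::ring_1)) =
     sum_list (map g (map snd (filter fst (zip S V)))) - sum_list (map g (map snd (filter (Not \<circ> fst) (zip S V))))"
proof (induction V arbitrary: S)
  case (Cons v V)
  then show ?case by (cases S) (auto simp: algebra_simps)
qed simp

definition edge :: "int \<times> (real \<Rightarrow> 'a) \<Rightarrow> 'a \<times> 'a" where
  "edge v = (if fst v = 1 then (snd v 0, snd v 1) else (snd v 1, snd v 0))"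

definition bterm :: "'a \<Rightarrow> int \<times> (real \<Rightarrow> 'a) \<Rightarrow> int" where
  "bterm x v = (if snd v 1 = x then fst v else 0) - (if snd v 0 = x then fst v else 0)"

lemma cb_bterm: "chain_boundary U x = sum_list (map (bterm x) U)"
  unfolding chain_boundary_def bterm_def by (induction U) auto

lemma deg_edge: "(\<forall>v\<in>set V. fst v = 1 \<or> fst v = -1) \<Longrightarrow>
   deg (map edge V) x = sum_list (map (bterm x) V) + 2 * (\<Sum>v\<leftarrow>V. of_bool (fst (edge v) = x))"
  by (induction V) (auto simp: edge_def bterm_def)

lemma half:
  assumes "lip_chain U" "chain_boundary U = (\<lambda>x. 2 * T x)"
  shows "\<exists>A. lip_chain A \<and> chain_boundary A = T \<and> 2 * chain_mass A \<le> chain_mass U"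
proof -
  define V where "V = expand U"
  have unit: "\<forall>v\<in>set V. fst v = 1 \<or> fst v = -1" using expand_unit V_def by blast
  have lipV: "lip_chain V" using expand_lip[OF assms(1)] V_def by simp
  have bV: "sum_list (map (bterm x) V) = 2 * T x" for x
    using expand_boundary[of U x] assms(2) V_def cb_bterm by metis
  have "\<forall>x. even (deg (map edge V) x)"
    using deg_edge[OF unit] bV by simp
  then obtain S where S: "length S = length (map edge V)"
     "\<forall>x. (\<Sum>(s,e)\<leftarrow>zip S (map edge V). ob s e x) = 0" using balanced by blast
  have lS: "length S = length V" using S by simp
  define A where "A = map snd (filter fst (zip S V))"
  define B where "B = map snd (filter (Not \<circ> fst) (zip S V))"
  have obe: "ob s (edge v) x = (if s then 1 else -1) * bterm x v" if "v \<in> set V" for s v x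
    using unit that by (auto simp: ob_def edge_def bterm_def)
  have zm: "zip S (map edge V) = map (\<lambda>(s,v). (s, edge v)) (zip S V)"
    by (simp add: zip_map2)
  have "(\<Sum>(s,v)\<leftarrow>zip S V. (if s then 1 else -1) * bterm x v) = 0" for x
  proof -
    have "(\<Sum>(s,v)\<leftarrow>zip S V. (if s then 1 else -1) * bterm x v) = (\<Sum>(s,v)\<leftarrow>zip S V. ob s (edge v) x)"
      by (intro arg_cong[where f=sum_list] map_cong) (auto dest: set_zip_rightD simp: obe)
    also have "\<dots> = (\<Sum>(s,e)\<leftarrow>zip S (map edge V). ob s e x)"
      by (simp add: zm case_prod_unfold comp_def)
    finally show ?thesis using S(2) by simp
  qed
  hence d: "sum_list (map (bterm x) A) = sum_list (map (bterm x) B)" for x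
    using split_diff[OF lS, of "bterm x"] unfolding A_def B_def by simp
  have s: "sum_list (map (bterm x) A) + sum_list (map (bterm x) B) = 2 * T x" for x
    using split_sum[OF lS, of "bterm x"] bV unfolding A_def B_def by simp
  have bA: "chain_boundary A = T" and bB: "chain_boundary B = T"
    using d s by (auto simp: cb_bterm fun_eq_iff)
  have sub: "set A \<subseteq> set V" "set B \<subseteq> set V"
    unfolding A_def B_def by (auto dest: set_zip_rightD)
  have lA: "lip_chain A" and lB: "lip_chain B" using lipV sub unfolding lip_chain_def by auto
  have "chain_mass V = chain_mass A + chain_mass B"
    using split_sum[OF lS] unfolding chain_mass_def A_def B_def by blast
  moreover have "chain_mass V = chain_mass U" using expand_mass V_def by simp
  ultimately show ?thesis using lA lB bA bB
    by (cases "chain_mass A \<le> chain_mass B") force+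
qed

theorem proposition4p1:
  fixes T :: "real ^ 'n \<Rightarrow> int"
  assumes "zero_chain T"
    and "\<exists>U. lip_chain U \<and> chain_boundary U = T"
  shows "FV T = FV (\<lambda>x. 2 * T x) / 2"
proof -
  let ?P = "{chain_mass U | U :: (int \<times> (real \<Rightarrow> real^'n)) list. lip_chain U \<and> chain_boundary U = T}"
  let ?Q = "{chain_mass U | U :: (int \<times> (real \<Rightarrow> real^'n)) list. lip_chain U \<and> chain_boundary U = (\<lambda>x. 2 * T x)}"
  obtain U0 where U0: "lip_chain U0" "chain_boundary U0 = T" using assms(2) by blast
  have Pne: "?P \<noteq> {}" using U0 by blast
  have Qne: "?Q \<noteq> {}" using U0 dbl_props[of U0] by (auto intro!: exI[of _ "dbl U0"])
  have Pb: "bdd_below ?P" by (rule bdd_belowI[of _ 0]) (auto simp: mass_nonneg)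
  have Qb: "bdd_below ?Q" by (rule bdd_belowI[of _ 0]) (auto simp: mass_nonneg)
  have 1: "FV (\<lambda>x. 2 * T x) \<le> 2 * FV T"
  proof -
    have "FV (\<lambda>x. 2 * T x) / 2 \<le> Inf ?P"
    proof (rule cInf_greatest[OF Pne])
      fix m assume "m \<in> ?P"
      then obtain U :: "(int \<times> (real \<Rightarrow> real^'n)) list" where U: "lip_chain U" "chain_boundary U = T"
        and m: "m = chain_mass U" by blast
      have "chain_mass (dbl U) \<in> ?Q" using U dbl_props[of U] by (intro CollectI exI[of _ "dbl U"]) auto
      hence "FV (\<lambda>x. 2 * T x) \<le> chain_mass (dbl U)" unfolding FV_def by (rule cInf_lower[OF _ Qb])
      then show "FV (\<lambda>x. 2 * T x) / 2 \<le> m" using dbl_props[of U] m by simp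
    qed
    then show ?thesis unfolding FV_def by simp
  qed
  have 2: "2 * FV T \<le> FV (\<lambda>x. 2 * T x)"
  proof -
    have "FV T \<le> Inf ?Q / 2"
    proof -
      have "2 * FV T \<le> Inf ?Q"
      proof (rule cInf_greatest[OF Qne])
        fix m assume "m \<in> ?Q"
        then obtain U :: "(int \<times> (real \<Rightarrow> real^'n)) list" where U: "lip_chain U" "chain_boundary U = (\<lambda>x. 2 * T x)"
          and m: "m = chain_mass U" by blast
        obtain A where A: "lip_chain A" "chain_boundary A = T" "2 * chain_mass A \<le> chain_mass U"
          using half[OF U] by blast
        have "chain_mass A \<in> ?P" using A by auto
        hence "FV T \<le> chain_mass A" unfolding FV_def by (rule cInf_lower[OF _ Pb])
        then show "2 * FV T \<le> m" using A(3) m by simp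
      qed
      then show ?thesis by simp
    qed
    then show ?thesis unfolding FV_def by simp
  qed
  show ?thesis using 1 2 by simp
qed

end
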